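(* Let $m\ge 3$ and let $C_1,\dots,C_m\subset\mathbb{R}^n$ be nonempty, closed, convex sets in general position, $C=C_1\times\cdots\times C_m$, and $D(x)=\sum_{i=1}^m\|x_i-x_{i+1}\|$ with $x_{m+1}=x_1$. If $x=(x_1,\dots,x_m)\in C$ has at least one component $x_i\in\operatorname{int}(C_i)$, then there exists $\bar x=(\bar x_1,\dots,\bar x_m)$ with $\bar x_i\in\operatorname{bd}(C_i)$ for every $i=1,\dots,m$ (so in particular $\bar x\in\operatorname{bd}(C)$) such that $D(\bar x)<D(x)$.
   Context: The family of nonempty closed convex sets $C_1,\dots,C_m\subset\mathbb{R}^n$ is in general position if for every $i$, $C_i\cap K_i=\varnothing$, where $K_i=\operatorname{conv}\big(\bigcup_{j\ne i}C_j\big)$ is the convex hull of the union of the other sets. $\operatorname{int}$ and $\operatorname{bd}$ denote interior and boundary in $\mathbb{R}^n$ (resp. in $\mathbb{R}^{mn}$ for $C$). *)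

theory Defs
  imports "HOL-Analysis.Analysis"
begin

text \<open>Sets C 0, ..., C (m-1) (0-based indexing of C_1..C_m) are in general position:
  each C i is disjoint from the convex hull of the union of the others.\<close>
definition general_position :: "nat \<Rightarrow> (nat \<Rightarrow> 'a::euclidean_space set) \<Rightarrow> bool" where
  "general_position m C \<longleftrightarrow>
     (\<forall>i<m. C i \<inter> convex hull (\<Union>j\<in>{0..<m} - {i}. C j) = {})"

definition perimeter :: "nat \<Rightarrow> (nat \<Rightarrow> 'a::euclidean_space) \<Rightarrow> real" where
  "perimeter m x = (\<Sum>i<m. norm (x i - x ((i + 1) mod m)))"

end

theory Submission imports Defs begin
lemma seg_lemma:
  fixes p xk y n :: "'a::euclidean_space"
  assumes "xk \<in> closed_segment p y" "y \<in> closed_segment xk n" "y \<noteq> xk"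
  shows "xk \<in> closed_segment p n"
proof -
  obtain s where s: "0 \<le> s" "s \<le> 1" "xk = (1 - s) *\<^sub>R p + s *\<^sub>R y"
    using assms(1) unfolding closed_segment_def by blast
  obtain t where t: "0 \<le> t" "t \<le> 1" "y = (1 - t) *\<^sub>R xk + t *\<^sub>R n"
    using assms(2) unfolding closed_segment_def by blast
  define c where "c = 1 - s + s * t"
  have c0: "c > 0"
  proof (rule ccontr)
    assume "\<not> c > 0"
    then have "s = 1" "s * t = 0" using s t unfolding c_def
      by (smt (verit) mult_nonneg_nonneg)+
    then have "t = 0" by simp
    then show False using t assms(3) by simp
  qed
  have eq: "c *\<^sub>R xk = (1 - s) *\<^sub>R p + (s * t) *\<^sub>R n"
  proof -
    have "xk = (1 - s) *\<^sub>R p + (s * (1 - t)) *\<^sub>R xk + (s * t) *\<^sub>R n"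
      using s(3) t(3) by (simp add: algebra_simps)
    then show ?thesis unfolding c_def by (simp add: algebra_simps)
  qed
  define u where "u = s * t / c"
  have u: "0 \<le> u" "u \<le> 1" using c0 s t unfolding u_def c_def by (auto simp: field_simps)
  have "xk = (1 - u) *\<^sub>R p + u *\<^sub>R n"
  proof -
    have "xk = (1/c) *\<^sub>R (c *\<^sub>R xk)" using c0 by simp
    also have "\<dots> = ((1 - s)/c) *\<^sub>R p + (s*t/c) *\<^sub>R n" unfolding eq by (simp add: scaleR_add_right)
    also have "(1 - s)/c = 1 - u" unfolding u_def c_def using c0 unfolding c_def by (simp add: field_simps)
    finally show ?thesis unfolding u_def by simp
  qed
  then show ?thesis using u unfolding closed_segment_def by blast
qed

lemma sum_two:
  fixes h :: "nat \<Rightarrow> real"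
  assumes "finite A" "k \<in> A" "p \<in> A" "k \<noteq> p" "\<forall>i\<in>A. i \<noteq> k \<and> i \<noteq> p \<longrightarrow> h i = 0"
  shows "sum h A = h k + h p"
proof -
  have "sum h A = sum h {k, p}"
    by (rule sum.mono_neutral_right) (use assms in auto)
  then show ?thesis using assms(4) by simp
qed

lemma step:
  fixes C :: "nat \<Rightarrow> 'a::euclidean_space set" and x :: "nat \<Rightarrow> 'a"
  assumes m3: "m \<ge> 3"
    and cl: "\<forall>i<m. closed (C i)"
    and gp: "general_position m C"
    and xC: "\<forall>i<m. x i \<in> C i"
    and km: "k < m" and xk: "x k \<in> interior (C k)"
  shows "\<exists>y. y \<in> frontier (C k) \<and> perimeter m (x(k := y)) < perimeter m x"
proof -
  define n where "n = Suc k mod m"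
  define p where "p = (k + m - 1) mod m"
  have nm: "n < m" "n \<noteq> k" using km m3 unfolding n_def
    by (auto simp: mod_Suc split: if_splits)
  have pm: "p < m" "p \<noteq> k" "(p + 1) mod m = k"
  proof -
    show "p < m" using m3 unfolding p_def by simp
    show "(p + 1) mod m = k" unfolding p_def using km m3
      by (metis Suc_eq_plus1 add_Suc_right add_diff_cancel_left' le_add_diff_inverse2 mod_Suc_eq
          mod_add_self2 mod_less nat_le_linear not_add_less1 plus_1_eq_Suc add_leD2 le_trans numeral_le_one_iff semiring_norm(70))
    show "p \<noteq> k"
    proof (cases "k = 0")
      case True then show ?thesis unfolding p_def using m3 by simp
    next
      case False then have "p = k - 1" unfolding p_def using km by (simp add: mod_if)
      then show ?thesis using False by simp
    qed
  qed
  let ?K = "convex hull (\<Union>j\<in>{0..<m} - {k}. C j)"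
  have disj: "C k \<inter> ?K = {}" using gp km unfolding general_position_def by blast
  have nK: "x n \<in> ?K" using nm xC by (intro hull_inc) auto
  have pK: "x p \<in> ?K" using pm xC by (intro hull_inc) auto
  have ck: "closed (C k)" using cl km by auto
  have xkC: "x k \<in> C k" using xC km by auto
  have "closed_segment (x k) (x n) \<inter> frontier (C k) \<noteq> {}"
  proof (rule connected_Int_frontier)
    show "connected (closed_segment (x k) (x n))" by simp
    show "closed_segment (x k) (x n) \<inter> C k \<noteq> {}" using xkC by auto
    show "closed_segment (x k) (x n) - C k \<noteq> {}" using nK disj by auto
  qed
  then obtain y where yseg: "y \<in> closed_segment (x k) (x n)" and yf: "y \<in> frontier (C k)" by blast
  have yne: "y \<noteq> x k" using yf xk by (auto simp: frontier_def)
  have d1: "norm (x k - x n) = norm (x k - y) + norm (y - x n)"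
    using yseg unfolding between_mem_segment[symmetric] between by (simp add: dist_norm)
  have d2: "norm (x p - y) < norm (x p - x k) + norm (x k - y)"
  proof -
    have le: "norm (x p - y) \<le> norm (x p - x k) + norm (x k - y)"
      by (metis norm_triangle_ineq diff_add_cancel add_diff_eq)
    have "norm (x p - y) \<noteq> norm (x p - x k) + norm (x k - y)"
    proof
      assume "norm (x p - y) = norm (x p - x k) + norm (x k - y)"
      then have "x k \<in> closed_segment (x p) y"
        unfolding between_mem_segment[symmetric] between by (simp add: dist_norm)
      then have "x k \<in> closed_segment (x p) (x n)" using seg_lemma yseg yne by blast
      moreover have "closed_segment (x p) (x n) \<subseteq> ?K"
        using pK nK by (simp add: closed_segment_subset convex_convex_hull)
      ultimately show False using disj xkC by blast
    qed
    then show ?thesis using le by simp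
  qed
  define x' where "x' = x(k := y)"
  define h where "h i = norm (x' i - x' ((i + 1) mod m)) - norm (x i - x ((i + 1) mod m))" for i
  have "perimeter m x' - perimeter m x = sum h {..<m}"
    unfolding perimeter_def h_def by (simp add: sum_subtractf)
  also have "\<dots> = h k + h p"
  proof (rule sum_two)
    show "\<forall>i\<in>{..<m}. i \<noteq> k \<and> i \<noteq> p \<longrightarrow> h i = 0"
    proof (intro ballI impI)
      fix i assume i: "i \<in> {..<m}" "i \<noteq> k \<and> i \<noteq> p"
      have "(i + 1) mod m \<noteq> k"
      proof
        assume a: "(i + 1) mod m = k"
        have "i = p"
        proof (cases "i + 1 < m")
          case True
          then have "k = i + 1" using a by simp
          then show ?thesis unfolding p_def using True by simp
        next
          case False
          then have im: "i + 1 = m" using i by auto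
          then have "i = m - 1" by simp
          moreover have "k = 0" using a im by simp
          ultimately show ?thesis unfolding p_def using m3 by simp
        qed
        then show False using i by simp
      qed
      then show "h i = 0" unfolding h_def x'_def using i by simp
    qed
  qed (use km pm in auto)
  also have "h k = norm (y - x n) - norm (x k - x n)"
    unfolding h_def x'_def using nm by (simp add: n_def)
  also have "h p = norm (x p - y) - norm (x p - x k)"
    unfolding h_def x'_def using pm by simp
  finally have "perimeter m x' - perimeter m x = norm (y - x n) - norm (x k - x n) + (norm (x p - y) - norm (x p - x k))" .
  then have "perimeter m x' < perimeter m x" using d1 d2 by linarith
  then show ?thesis using yf unfolding x'_def by blast
qed

lemma iter:
  fixes C :: "nat \<Rightarrow> 'a::euclidean_space set"
  assumes m3: "m \<ge> 3"
    and cl: "\<forall>i<m. closed (C i)"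
    and gp: "general_position m C"
  shows "\<forall>x. card {i. i < m \<and> x i \<in> interior (C i)} = N \<longrightarrow> (\<forall>i<m. x i \<in> C i) \<longrightarrow>
     (\<exists>xb. (\<forall>i<m. xb i \<in> frontier (C i)) \<and> perimeter m xb \<le> perimeter m x)"
proof (induction N rule: less_induct)
  case (less N)
  show ?case
  proof (intro allI impI)
    fix x :: "nat \<Rightarrow> 'a"
    assume cN: "card {i. i < m \<and> x i \<in> interior (C i)} = N" and xC: "\<forall>i<m. x i \<in> C i"
    show "\<exists>xb. (\<forall>i<m. xb i \<in> frontier (C i)) \<and> perimeter m xb \<le> perimeter m x"
    proof (cases "{i. i < m \<and> x i \<in> interior (C i)} = {}")
      case True
      have "\<forall>i<m. x i \<in> frontier (C i)"
        using True xC cl by (auto simp: frontier_def)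
      then show ?thesis by blast
    next
      case False
      then obtain k where k: "k < m" "x k \<in> interior (C k)" by blast
      obtain y where y: "y \<in> frontier (C k)" "perimeter m (x(k := y)) < perimeter m x"
        using step[OF m3 cl gp xC k] by blast
      have yC: "y \<in> C k" using y(1) cl k by (metis frontier_subset_closed subsetD)
      have yi: "y \<notin> interior (C k)" using y(1) by (auto simp: frontier_def)
      have seteq: "{i. i < m \<and> (x(k := y)) i \<in> interior (C i)} = {i. i < m \<and> x i \<in> interior (C i)} - {k}"
        using yi by auto
      have "card {i. i < m \<and> (x(k := y)) i \<in> interior (C i)} < N"
        unfolding seteq cN[symmetric] using k by (intro card_Diff1_less) auto
      moreover have "\<forall>i<m. (x(k := y)) i \<in> C i" using xC yC by auto
      ultimately obtain xb where "\<forall>i<m. xb i \<in> frontier (C i)" "perimeter m xb \<le> perimeter m (x(k := y))"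
        using less by blast
      then show ?thesis using y(2) by (intro exI[of _ xb]) auto
    qed
  qed
qed

theorem mainTheorem2:
  fixes C :: "nat \<Rightarrow> 'a::euclidean_space set" and x :: "nat \<Rightarrow> 'a"
  assumes "m \<ge> 3"
    and "\<forall>i<m. C i \<noteq> {} \<and> closed (C i) \<and> convex (C i)"
    and "general_position m C"
    and "\<forall>i<m. x i \<in> C i"
    and "\<exists>i<m. x i \<in> interior (C i)"
  shows "\<exists>xb :: nat \<Rightarrow> 'a. (\<forall>i<m. xb i \<in> frontier (C i)) \<and> perimeter m xb < perimeter m x"
proof -
  have cl: "\<forall>i<m. closed (C i)" using assms(2) by auto
  obtain k where k: "k < m" "x k \<in> interior (C k)" using assms(5) by blast
  obtain y where y: "y \<in> frontier (C k)" "perimeter m (x(k := y)) < perimeter m x"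
    using step[OF assms(1) cl assms(3) assms(4) k] by blast
  have yC: "y \<in> C k" using y(1) cl k by (metis frontier_subset_closed subsetD)
  have "\<forall>i<m. (x(k := y)) i \<in> C i" using assms(4) yC by auto
  then obtain xb where "\<forall>i<m. xb i \<in> frontier (C i)" "perimeter m xb \<le> perimeter m (x(k := y))"
    using iter[OF assms(1) cl assms(3)] by blast
  then show ?thesis using y(2) by (intro exI[of _ xb]) auto
qed
end
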